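(* In the interpolating system described in the context, let $\mathcal Z=n+\sqrt{B(t)/N}\,sz$ and, for replicas $\alpha=1,2$, $\mathcal Z^{(\alpha)}=n+\sqrt{B(t)/N}\,sz^{(\alpha)}$ with $z^{(\alpha)}=\mathbf 1-x^{(\alpha)}$. Then $$\frac1N\mathbb E\langle\|\mathcal Z\|^2\rangle_{t,u}=1\qquad\text{and}\qquad \mathbb E\bigl\langle(n\cdot\mathcal Z^{(2)})(z^{(1)}\cdot z^{(2)})\bigr\rangle_{t,u}=\sum_{k=1}^K\mathbb E\bigl\langle(n\cdot\mathcal Z)z_k\bigr\rangle_{t,u}.$$
   Context: Let $K,N$ with $K/N=\beta$, $B(t),\lambda(t)\ge0$ for $t\in[0,1]$, $u\ge0$. Random data: $n\in\mathbb R^N$, $w,h\in\mathbb R^K$ with i.i.d. $\mathcal N(0,1)$ entries, $N\times K$ matrix $s$ with i.i.d. $\mathcal N(0,1)$ entries, all independent; $\mathbb E$ is expectation over them. For $x\in\{\pm1\}^K$, $z=\mathbf 1-x$ ($\mathbf 1$ the all-ones vector) and $h_u(x)=\sqrt u\sum_kh_kx_k+u\sum_kx_k-\sqrt u\sum_k|h_k|$. Gibbs measure $p_{t,u}(x)\propto\exp\bigl(-\frac12\|n+N^{-1/2}B(t)^{1/2}sz\|^2-\frac12\|w+\lambda(t)^{1/2}z\|^2+h_u(x)\bigr)$ on $\{\pm1\}^K$. $\langle\cdot\rangle_{t,u}$ is average under $p_{t,u}$, extended to functions of two replicas $x^{(1)},x^{(2)}$ via the product measure $p_{t,u}(x^{(1)})p_{t,u}(x^{(2)})$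 with the same random data. *)

theory Defs
  imports "HOL-Probability.Probability"
begin

text \<open>Index type for all Gaussian random data: n_i (i<N), w_k, h_k (k<K), s_{ik}.\<close>
datatype ridx = Rn nat | Rw nat | Rh nat | Rs nat nat

definition data_idx :: "nat \<Rightarrow> nat \<Rightarrow> ridx set" where
  "data_idx N K = Rn ` {..<N} \<union> Rw ` {..<K} \<union> Rh ` {..<K}
      \<union> (\<lambda>(i,k). Rs i k) ` ({..<N} \<times> {..<K})"

definition gauss_data :: "nat \<Rightarrow> nat \<Rightarrow> (ridx \<Rightarrow> real) measure" where
  "gauss_data N K = (\<Pi>\<^sub>M j\<in>data_idx N K. density lborel (\<lambda>x. ennreal (std_normal_density x)))"

definition configs :: "nat \<Rightarrow> (nat \<Rightarrow> real) set" where
  "configs K = {..<K} \<rightarrow>\<^sub>E {-1, 1}"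

definition zvec :: "(nat \<Rightarrow> real) \<Rightarrow> nat \<Rightarrow> real" where
  "zvec x k = 1 - x k"

definition Zcomp :: "nat \<Rightarrow> nat \<Rightarrow> real \<Rightarrow> (ridx \<Rightarrow> real) \<Rightarrow> (nat \<Rightarrow> real) \<Rightarrow> nat \<Rightarrow> real" where
  "Zcomp N K b \<omega> x i = \<omega> (Rn i) + sqrt (b / real N) * (\<Sum>k<K. \<omega> (Rs i k) * zvec x k)"

definition h_u :: "nat \<Rightarrow> real \<Rightarrow> (ridx \<Rightarrow> real) \<Rightarrow> (nat \<Rightarrow> real) \<Rightarrow> real" where
  "h_u K u \<omega> x = sqrt u * (\<Sum>k<K. \<omega> (Rh k) * x k) + u * (\<Sum>k<K. x k)
      - sqrt u * (\<Sum>k<K. \<bar>\<omega> (Rh k)\<bar>)"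

definition logw :: "nat \<Rightarrow> nat \<Rightarrow> real \<Rightarrow> real \<Rightarrow> real \<Rightarrow> (ridx \<Rightarrow> real) \<Rightarrow> (nat \<Rightarrow> real) \<Rightarrow> real" where
  "logw N K b l u \<omega> x =
     - (1/2) * (\<Sum>i<N. (Zcomp N K b \<omega> x i)\<^sup>2)
     - (1/2) * (\<Sum>k<K. (\<omega> (Rw k) + sqrt l * zvec x k)\<^sup>2)
     + h_u K u \<omega> x"

definition gibbs1 :: "nat \<Rightarrow> nat \<Rightarrow> real \<Rightarrow> real \<Rightarrow> real \<Rightarrow> (ridx \<Rightarrow> real)
    \<Rightarrow> ((nat \<Rightarrow> real) \<Rightarrow> real) \<Rightarrow> real" where
  "gibbs1 N K b l u \<omega> f =
     (\<Sum>x\<in>configs K. f x * exp (logw N K b l u \<omega> x)) / (\<Sum>x\<in>configs K. exp (logw N K b l u \<omega> x))"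

definition gibbs2 :: "nat \<Rightarrow> nat \<Rightarrow> real \<Rightarrow> real \<Rightarrow> real \<Rightarrow> (ridx \<Rightarrow> real)
    \<Rightarrow> ((nat \<Rightarrow> real) \<Rightarrow> (nat \<Rightarrow> real) \<Rightarrow> real) \<Rightarrow> real" where
  "gibbs2 N K b l u \<omega> f =
     (\<Sum>x1\<in>configs K. \<Sum>x2\<in>configs K.
         f x1 x2 * exp (logw N K b l u \<omega> x1) * exp (logw N K b l u \<omega> x2))
     / (\<Sum>x\<in>configs K. exp (logw N K b l u \<omega> x))\<^sup>2"

end

theory Submission
  imports Defs
begin


definition mu :: "real measure" where
  "mu = density lborel (\<lambda>x. ennreal (std_normal_density x))"

lemma prob_mu: "prob_space mu"
  unfolding mu_def by (rule prob_space_normal_density) simp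

lemma sets_mu[simp, measurable_cong]: "sets mu = sets borel"
  unfolding mu_def by simp

lemma bm_mu: "borel_measurable mu = borel_measurable borel"
  by (rule measurable_cong_sets) simp_all

lemma space_mu[simp]: "space mu = UNIV"
  unfolding mu_def by simp

lemma mu_shift:
  assumes [measurable]: "h \<in> borel_measurable borel"
  shows "(\<integral>\<^sup>+ t. h (t + a) \<partial>mu) = (\<integral>\<^sup>+ t. ennreal (exp (a * t - a^2/2)) * h t \<partial>mu)"
proof -
  have "(\<integral>\<^sup>+ t. h (t + a) \<partial>mu) = (\<integral>\<^sup>+ t. ennreal (std_normal_density t) * h (t + a) \<partial>lborel)"
    unfolding mu_def by (subst nn_integral_density) auto
  also have "\<dots> = (\<integral>\<^sup>+ t. ennreal (std_normal_density ((a + t) - a)) * h (a + t) \<partial>lborel)"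
    by (simp add: add.commute)
  also have "\<dots> = (\<integral>\<^sup>+ t. ennreal (std_normal_density (t - a)) * h t \<partial>lborel)"
    using nn_integral_real_affine[where c=1 and t=a and f="\<lambda>t. ennreal (std_normal_density (t - a)) * h t"]
    by simp
  also have "\<dots> = (\<integral>\<^sup>+ t. ennreal (std_normal_density t) * (ennreal (exp (a * t - a^2/2)) * h t) \<partial>lborel)"
  proof (rule nn_integral_cong)
    fix t :: real
    have "std_normal_density (t - a) = std_normal_density t * exp (a * t - a^2/2)"
      unfolding std_normal_density_def
      by (simp add: exp_add[symmetric] power2_eq_square field_simps)
    then show "ennreal (std_normal_density (t - a)) * h t = ennreal (std_normal_density t) * (ennreal (exp (a * t - a^2/2)) * h t)"
      by (simp add: ennreal_mult' mult.assoc normal_density_nonneg)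
  qed
  also have "\<dots> = (\<integral>\<^sup>+ t. ennreal (exp (a * t - a^2/2)) * h t \<partial>mu)"
    unfolding mu_def by (subst nn_integral_density) auto
  finally show ?thesis .
qed

lemma mu_flip:
  assumes [measurable]: "h \<in> borel_measurable borel" and s: "s = 1 \<or> s = -1"
  shows "(\<integral>\<^sup>+ t. h (s * t) \<partial>mu) = (\<integral>\<^sup>+ t. ennreal 1 * h t \<partial>mu)"
proof (cases "s = 1")
  case True then show ?thesis by simp
next
  case False
  then have s': "s = -1" using s by auto
  have "(\<integral>\<^sup>+ t. h (s * t) \<partial>mu) = (\<integral>\<^sup>+ t. ennreal (std_normal_density t) * h (- t) \<partial>lborel)"
    unfolding mu_def s' by (subst nn_integral_density) auto
  also have "\<dots> = (\<integral>\<^sup>+ t. ennreal (std_normal_density (0 + (-1) * t)) * h t \<partial>lborel)"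
    using nn_integral_real_affine[where c="-1" and t=0 and f="\<lambda>t. ennreal (std_normal_density t) * h (- t)"]
    by simp
  also have "\<dots> = (\<integral>\<^sup>+ t. ennreal (std_normal_density t) * h t \<partial>lborel)"
    by (simp add: std_normal_density_def)
  also have "\<dots> = (\<integral>\<^sup>+ t. ennreal 1 * h t \<partial>mu)"
    unfolding mu_def by (subst nn_integral_density) auto
  finally show ?thesis .
qed

lemma sf_mu: "sigma_finite_measure mu"
  using prob_mu prob_space_imp_sigma_finite by blast

lemma psf_mu: "product_sigma_finite (\<lambda>_::'i. mu)"
  unfolding product_sigma_finite_def using sf_mu by blast

lemma pps_mu: "product_prob_space (\<lambda>_::'i. mu)"
  by (rule product_prob_spaceI) (rule prob_mu)

lemma prod_transform:
  fixes J :: "'i set" and f :: "'i \<Rightarrow> real \<Rightarrow> real" and r :: "'i \<Rightarrow> real \<Rightarrow> ennreal"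
  assumes "finite J"
  and f[measurable]: "\<And>j. f j \<in> borel_measurable borel"
  and r[measurable]: "\<And>j. r j \<in> borel_measurable borel"
  and key: "\<And>j h. j \<in> J \<Longrightarrow> h \<in> borel_measurable borel \<Longrightarrow>
       (\<integral>\<^sup>+ t. h (f j t) \<partial>mu) = (\<integral>\<^sup>+ t. r j t * h t \<partial>mu)"
  and H: "H \<in> borel_measurable (PiM J (\<lambda>_. mu))"
  shows "(\<integral>\<^sup>+ y. H (\<lambda>i\<in>J. f i (y i)) \<partial>PiM J (\<lambda>_. mu))
       = (\<integral>\<^sup>+ y. (\<Prod>i\<in>J. r i (y i)) * H y \<partial>PiM J (\<lambda>_. mu))"
  using assms(1) key H
proof (induction J arbitrary: H rule: finite_induct)
  case empty
  interpret product_sigma_finite "\<lambda>_::'i. mu" by (rule psf_mu)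
  show ?case
    by (simp add: PiM_empty nn_integral_count_space_finite restrict_def)
next
  case (insert a J)
  interpret product_sigma_finite "\<lambda>_::'i. mu" by (rule psf_mu)
  interpret sigma_finite_measure mu by (rule sf_mu)
  note Hm[measurable] = insert.prems(2)
  have Pm[measurable]: "(\<lambda>y. \<lambda>i\<in>K. f i (y i)) \<in> measurable (PiM K (\<lambda>_. mu)) (PiM K (\<lambda>_. mu))" for K :: "'i set"
    by (rule measurable_restrict) measurable
  define H' where "H' z = (\<integral>\<^sup>+ t. r a t * H (z(a := t)) \<partial>mu)" for z
  have H'm[measurable]: "H' \<in> borel_measurable (PiM J (\<lambda>_. mu))"
    unfolding H'_def by measurable
  have "(\<integral>\<^sup>+ y. H (\<lambda>i\<in>insert a J. f i (y i)) \<partial>PiM (insert a J) (\<lambda>_. mu))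
      = (\<integral>\<^sup>+ x. (\<integral>\<^sup>+ t. H (\<lambda>i\<in>insert a J. f i ((x(a := t)) i)) \<partial>mu) \<partial>PiM J (\<lambda>_. mu))"
    by (rule product_nn_integral_insert) (use insert in auto)
  also have "\<dots> = (\<integral>\<^sup>+ x. H' (\<lambda>i\<in>J. f i (x i)) \<partial>PiM J (\<lambda>_. mu))"
  proof (rule nn_integral_cong)
    fix x assume x: "x \<in> space (PiM J (\<lambda>_. mu))"
    have eq: "(\<lambda>i\<in>insert a J. f i ((x(a := t)) i)) = (\<lambda>i\<in>J. f i (x i))(a := f a t)" for t
      using insert(2) by (auto simp: restrict_def fun_eq_iff)
    have xm: "(\<lambda>i\<in>J. f i (x i)) \<in> space (PiM J (\<lambda>_. mu))"
      using measurable_space[OF Pm x] .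
    have hm: "(\<lambda>t. H ((\<lambda>i\<in>J. f i (x i))(a := t))) \<in> borel_measurable borel"
      using measurable_comp[OF measurable_component_update[OF xm insert(2)] Hm]
      unfolding comp_def bm_mu[symmetric] .
    show "(\<integral>\<^sup>+ t. H (\<lambda>i\<in>insert a J. f i ((x(a := t)) i)) \<partial>mu) = H' (\<lambda>i\<in>J. f i (x i))"
      unfolding eq H'_def using insert.prems(1)[of a, OF _ hm] by simp
  qed
  also have "\<dots> = (\<integral>\<^sup>+ x. (\<Prod>i\<in>J. r i (x i)) * H' x \<partial>PiM J (\<lambda>_. mu))"
    by (rule insert.IH) (use insert.prems in auto)
  also have "\<dots> = (\<integral>\<^sup>+ x. (\<integral>\<^sup>+ t. (\<Prod>i\<in>J. r i (x i)) * (r a t * H (x(a := t))) \<partial>mu) \<partial>PiM J (\<lambda>_. mu))"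
  proof (rule nn_integral_cong)
    fix x assume x: "x \<in> space (PiM J (\<lambda>_. mu))"
    have hm: "(\<lambda>t. r a t * H (x(a := t))) \<in> borel_measurable mu"
      using measurable_comp[OF measurable_component_update[OF x insert(2)] Hm]
      by (simp add: comp_def)
    show "(\<Prod>i\<in>J. r i (x i)) * H' x = (\<integral>\<^sup>+ t. (\<Prod>i\<in>J. r i (x i)) * (r a t * H (x(a := t))) \<partial>mu)"
      unfolding H'_def by (rule nn_integral_cmult[symmetric]) (rule hm)
  qed
  also have "\<dots> = (\<integral>\<^sup>+ x. (\<integral>\<^sup>+ t. (\<Prod>i\<in>insert a J. r i ((x(a := t)) i)) * H (x(a := t)) \<partial>mu) \<partial>PiM J (\<lambda>_. mu))"
  proof (intro nn_integral_cong)
    fix x t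
    have "(\<Prod>i\<in>insert a J. r i ((x(a := t)) i)) = r a t * (\<Prod>i\<in>J. r i (x i))"
      using insert(1,2) by (simp, intro arg_cong[where f="\<lambda>z. r a t * z"] prod.cong) auto
    then show "(\<Prod>i\<in>J. r i (x i)) * (r a t * H (x(a := t))) = (\<Prod>i\<in>insert a J. r i ((x(a := t)) i)) * H (x(a := t))"
      by (simp add: ac_simps)
  qed
  also have "\<dots> = (\<integral>\<^sup>+ y. (\<Prod>i\<in>insert a J. r i (y i)) * H y \<partial>PiM (insert a J) (\<lambda>_. mu))"
    by (rule product_nn_integral_insert[symmetric]) (use insert in auto)
  finally show ?case .
qed

lemma distr_eq_density_nn:
  assumes T[measurable]: "T \<in> measurable M M" and R[measurable]: "R \<in> borel_measurable M"
  and key: "\<And>H. H \<in> borel_measurable M \<Longrightarrow> (\<integral>\<^sup>+ x. H (T x) \<partial>M) = (\<integral>\<^sup>+ x. R x * H x \<partial>M)"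
  shows "distr M M T = density M R"
proof (rule measure_eqI)
  fix A assume A[measurable]: "A \<in> sets (distr M M T)"
  then have A': "A \<in> sets M" by simp
  have "emeasure (distr M M T) A = emeasure M (T -` A \<inter> space M)"
    by (rule emeasure_distr) (use A' in auto)
  also have "\<dots> = (\<integral>\<^sup>+ x. indicator (T -` A \<inter> space M) x \<partial>M)"
    by (rule nn_integral_indicator[symmetric]) (use A' T in auto)
  also have "\<dots> = (\<integral>\<^sup>+ x. indicator A (T x) \<partial>M)"
    by (rule nn_integral_cong) (auto simp: indicator_def)
  also have "\<dots> = (\<integral>\<^sup>+ x. R x * indicator A x \<partial>M)"
    by (rule key) (use A' in measurable)
  also have "\<dots> = emeasure (density M R) A"
    by (rule emeasure_density[symmetric]) (use A' in auto)
  finally show "emeasure (distr M M T) A = emeasure (density M R) A" .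
qed simp

lemma shift_CM_nn:
  fixes S J :: "'i set" and c :: "('i \<Rightarrow> real) \<Rightarrow> 'i \<Rightarrow> real"
  assumes fin: "finite S" "finite J" and disj: "S \<inter> J = {}"
  and cS: "\<And>x y. (\<And>j. j \<in> S \<Longrightarrow> x j = y j) \<Longrightarrow> c x = c y"
  and cm[measurable]: "\<And>j. (\<lambda>x. c x j) \<in> borel_measurable (PiM (S \<union> J) (\<lambda>_. mu))"
  and Hm[measurable]: "H \<in> borel_measurable (PiM (S \<union> J) (\<lambda>_. mu))"
  shows "(\<integral>\<^sup>+ x. H (\<lambda>j\<in>S \<union> J. x j + (if j \<in> J then c x j else 0)) \<partial>PiM (S \<union> J) (\<lambda>_. mu))
       = (\<integral>\<^sup>+ x. ennreal (exp (\<Sum>j\<in>J. c x j * x j - (c x j)^2 / 2)) * H x \<partial>PiM (S \<union> J) (\<lambda>_. mu))"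
proof -
  interpret product_sigma_finite "\<lambda>_::'i. mu" by (rule psf_mu)
  define sh where "sh x = (\<lambda>j\<in>S \<union> J. x j + (if j \<in> J then c x j else 0))" for x
  have shm[measurable]: "sh \<in> measurable (PiM (S \<union> J) (\<lambda>_. mu)) (PiM (S \<union> J) (\<lambda>_. mu))"
    unfolding sh_def by (rule measurable_restrict) measurable
  define a where "a x = c (merge S J (x, \<lambda>_. undefined))" for x
  have ca: "c (merge S J (x, y)) = a x" for x y
    unfolding a_def by (rule cS) (auto simp: merge_def)
  have ca': "c (\<lambda>i. if i \<in> S then x i else if i \<in> J then y i else undefined) = a x" for x y
    using ca[of x y] by (simp add: merge_def)
  have "(\<integral>\<^sup>+ x. H (sh x) \<partial>PiM (S \<union> J) (\<lambda>_. mu))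
      = (\<integral>\<^sup>+ x. (\<integral>\<^sup>+ y. H (sh (merge S J (x, y))) \<partial>PiM J (\<lambda>_. mu)) \<partial>PiM S (\<lambda>_. mu))"
    by (rule product_nn_integral_fold) (use fin disj in auto)
  also have "\<dots> = (\<integral>\<^sup>+ x. (\<integral>\<^sup>+ y. (\<Prod>j\<in>J. ennreal (exp (a x j * y j - (a x j)^2/2))) * H (merge S J (x, y)) \<partial>PiM J (\<lambda>_. mu)) \<partial>PiM S (\<lambda>_. mu))"
  proof (rule nn_integral_cong)
    fix x assume x: "x \<in> space (PiM S (\<lambda>_. mu))"
    have eq: "sh (merge S J (x, y)) = merge S J (x, \<lambda>j\<in>J. y j + a x j)" for y
      using disj by (auto simp: sh_def merge_def ca' fun_eq_iff)
    have Hx[measurable]: "(\<lambda>y. H (merge S J (x, y))) \<in> borel_measurable (PiM J (\<lambda>_. mu))"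
      using measurable_comp[OF measurable_Pair1'[OF x] measurable_comp[OF measurable_merge Hm]]
      by (simp add: comp_def)
    show "(\<integral>\<^sup>+ y. H (sh (merge S J (x, y))) \<partial>PiM J (\<lambda>_. mu))
        = (\<integral>\<^sup>+ y. (\<Prod>j\<in>J. ennreal (exp (a x j * y j - (a x j)^2/2))) * H (merge S J (x, y)) \<partial>PiM J (\<lambda>_. mu))"
      unfolding eq
      by (rule prod_transform[where f="\<lambda>j t. t + a x j" and r="\<lambda>j t. ennreal (exp (a x j * t - (a x j)^2/2))"])
         (use fin Hx in \<open>auto intro: mu_shift\<close>)
  qed
  also have "\<dots> = (\<integral>\<^sup>+ x. (\<integral>\<^sup>+ y. (\<lambda>z. ennreal (exp (\<Sum>j\<in>J. c z j * z j - (c z j)^2 / 2)) * H z) (merge S J (x, y)) \<partial>PiM J (\<lambda>_. mu)) \<partial>PiM S (\<lambda>_. mu))"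
  proof (intro nn_integral_cong)
    fix x y
    have "(\<Prod>j\<in>J. ennreal (exp (a x j * y j - (a x j)^2/2))) = ennreal (\<Prod>j\<in>J. exp (a x j * y j - (a x j)^2/2))"
      by (simp add: prod_ennreal)
    also have "\<dots> = ennreal (exp (\<Sum>j\<in>J. c (merge S J (x, y)) j * merge S J (x, y) j - (c (merge S J (x, y)) j)^2 / 2))"
      using disj by (auto simp: exp_sum[OF fin(2)] ca' merge_def intro!: arg_cong[where f=ennreal] prod.cong)
    finally show "(\<Prod>j\<in>J. ennreal (exp (a x j * y j - (a x j)^2/2))) * H (merge S J (x, y))
      = (\<lambda>z. ennreal (exp (\<Sum>j\<in>J. c z j * z j - (c z j)^2 / 2)) * H z) (merge S J (x, y))" by simp
  qed
  also have "\<dots> = (\<integral>\<^sup>+ x. ennreal (exp (\<Sum>j\<in>J. c x j * x j - (c x j)^2 / 2)) * H x \<partial>PiM (S \<union> J) (\<lambda>_. mu))"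
    by (rule product_nn_integral_fold[symmetric]) (use fin disj in auto)
  finally show ?thesis unfolding sh_def .
qed




lemma mem_I[simp]:
  "Rn i \<in> data_idx N K \<longleftrightarrow> i < N" "Rw k \<in> data_idx N K \<longleftrightarrow> k < K"
  "Rh k \<in> data_idx N K \<longleftrightarrow> k < K" "Rs i k \<in> data_idx N K \<longleftrightarrow> i < N \<and> k < K"
  by (auto simp: data_idx_def)

lemma finite_I[simp]: "finite (data_idx N K)"
  by (simp add: data_idx_def)

lemma configs_val: "x \<in> configs K \<Longrightarrow> k < K \<Longrightarrow> x k = 1 \<or> x k = -1"
  by (auto simp: configs_def PiE_def Pi_def)

lemma configs_sq: "x \<in> configs K \<Longrightarrow> k < K \<Longrightarrow> x k * x k = 1"
  using configs_val by fastforce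

lemma finite_configs[simp]: "finite (configs K)"
  by (simp add: configs_def finite_PiE)

lemma card_configs: "card (configs K) = 2 ^ K"
  by (simp add: configs_def card_PiE numeral_2_eq_2)

lemma configs_ne[simp]: "configs K \<noteq> {}"
  by (simp add: configs_def PiE_eq_empty_iff)

locale model =
  fixes N K :: nat and b l u :: real
  assumes u0: "u \<ge> 0"
begin

definition "I = data_idx N K"

definition one :: "nat \<Rightarrow> real" where "one = (\<lambda>k\<in>{..<K}. 1)"

definition mulc :: "(nat \<Rightarrow> real) \<Rightarrow> (nat \<Rightarrow> real) \<Rightarrow> nat \<Rightarrow> real" where
  "mulc t x = (\<lambda>k\<in>{..<K}. t k * x k)"

definition Pl :: "(ridx \<Rightarrow> real) \<Rightarrow> (nat \<Rightarrow> real) \<Rightarrow> real" where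
  "Pl ob x = - (1/2) * (\<Sum>i<N. (ob (Rn i) - sqrt (b / real N) * (\<Sum>k<K. ob (Rs i k) * x k))\<^sup>2)
     - (1/2) * (\<Sum>k<K. (ob (Rw k) - sqrt l * x k)\<^sup>2)
     - (1/2) * (\<Sum>k<K. (ob (Rh k) - sqrt u * x k)\<^sup>2)"

definition cc :: "(nat \<Rightarrow> real) \<Rightarrow> (ridx \<Rightarrow> real) \<Rightarrow> ridx \<Rightarrow> real" where
  "cc s v j = (case j of Rn i \<Rightarrow> sqrt (b / real N) * (\<Sum>k<K. v (Rs i k) * s k)
      | Rw k \<Rightarrow> sqrt l * s k | Rh k \<Rightarrow> sqrt u * s k | Rs i k \<Rightarrow> 0)"

definition obs :: "(nat \<Rightarrow> real) \<Rightarrow> (ridx \<Rightarrow> real) \<Rightarrow> ridx \<Rightarrow> real" where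
  "obs s v = (\<lambda>j\<in>I. v j + cc s v j)"

definition G1 :: "(ridx \<Rightarrow> real) \<Rightarrow> ((nat \<Rightarrow> real) \<Rightarrow> real) \<Rightarrow> real" where
  "G1 ob f = (\<Sum>x\<in>configs K. f x * exp (Pl ob x)) / (\<Sum>x\<in>configs K. exp (Pl ob x))"

definition G2 :: "(ridx \<Rightarrow> real) \<Rightarrow> ((nat \<Rightarrow> real) \<Rightarrow> (nat \<Rightarrow> real) \<Rightarrow> real) \<Rightarrow> real" where
  "G2 ob f = (\<Sum>x1\<in>configs K. \<Sum>x2\<in>configs K. f x1 x2 * exp (Pl ob x1) * exp (Pl ob x2))
     / (\<Sum>x\<in>configs K. exp (Pl ob x))\<^sup>2"

definition Cst :: "(ridx \<Rightarrow> real) \<Rightarrow> real" where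
  "Cst w = (1/2) * (\<Sum>k<K. (w (Rh k) + sqrt u)\<^sup>2) + u * K / 2 - sqrt u * (\<Sum>k<K. \<bar>w (Rh k)\<bar>)"

lemma obs_one_Rn: "i < N \<Longrightarrow> obs one w (Rn i) = w (Rn i) + sqrt (b / real N) * (\<Sum>k<K. w (Rs i k))"
  by (simp add: obs_def I_def cc_def one_def)

lemma obs_Rs: "i < N \<Longrightarrow> k < K \<Longrightarrow> obs s w (Rs i k) = w (Rs i k)"
  by (simp add: obs_def I_def cc_def)

lemma obs_Rw: "k < K \<Longrightarrow> obs s w (Rw k) = w (Rw k) + sqrt l * s k"
  by (simp add: obs_def I_def cc_def)

lemma obs_Rh: "k < K \<Longrightarrow> obs s w (Rh k) = w (Rh k) + sqrt u * s k"
  by (simp add: obs_def I_def cc_def)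

lemma one_k[simp]: "k < K \<Longrightarrow> one k = 1"
  by (simp add: one_def)

lemma logw_Pl:
  assumes u0: "u \<ge> 0" and x: "x \<in> configs K"
  shows "logw N K b l u w x = Pl (obs one w) x + Cst w"
proof -
  have n: "(\<Sum>i<N. (Zcomp N K b w x i)\<^sup>2) =
      (\<Sum>i<N. (obs one w (Rn i) - sqrt (b / real N) * (\<Sum>k<K. obs one w (Rs i k) * x k))\<^sup>2)"
  proof (rule sum.cong[OF refl])
    fix i assume "i \<in> {..<N}"
    then have i: "i < N" by simp
    have "(\<Sum>k<K. w (Rs i k) * zvec x k) = (\<Sum>k<K. w (Rs i k)) - (\<Sum>k<K. obs one w (Rs i k) * x k)"
      by (simp add: obs_Rs i zvec_def right_diff_distrib sum_subtractf)
    then show "(Zcomp N K b w x i)\<^sup>2 = (obs one w (Rn i) - sqrt (b / real N) * (\<Sum>k<K. obs one w (Rs i k) * x k))\<^sup>2"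
      by (simp add: Zcomp_def obs_one_Rn i right_diff_distrib add_diff_eq)
  qed
  have wsum: "(\<Sum>k<K. (w (Rw k) + sqrt l * zvec x k)\<^sup>2) = (\<Sum>k<K. (obs one w (Rw k) - sqrt l * x k)\<^sup>2)"
    by (rule sum.cong[OF refl]) (simp add: obs_Rw zvec_def right_diff_distrib add_diff_eq)
  have hk: "- (1/2) * (obs one w (Rh k) - sqrt u * x k)\<^sup>2
      = - (1/2) * (w (Rh k) + sqrt u)\<^sup>2 - u / 2 + sqrt u * (w (Rh k) * x k) + u * x k" if k: "k < K" for k
  proof -
    have su: "sqrt u * sqrt u = u" using u0 by simp
    from configs_val[OF x k] show ?thesis
      using u0 by (auto simp: obs_Rh k power2_eq_square algebra_simps su)
  qed
  have hsum: "- (1/2) * (\<Sum>k<K. (obs one w (Rh k) - sqrt u * x k)\<^sup>2)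
      = - (1/2) * (\<Sum>k<K. (w (Rh k) + sqrt u)\<^sup>2) - u * K / 2 + sqrt u * (\<Sum>k<K. w (Rh k) * x k) + u * (\<Sum>k<K. x k)"
  proof -
    have "- (1/2) * (\<Sum>k<K. (obs one w (Rh k) - sqrt u * x k)\<^sup>2) = (\<Sum>k<K. - (1/2) * (obs one w (Rh k) - sqrt u * x k)\<^sup>2)"
      by (simp add: sum_distrib_left)
    also have "\<dots> = (\<Sum>k<K. - (1/2) * (w (Rh k) + sqrt u)\<^sup>2 - u / 2 + sqrt u * (w (Rh k) * x k) + u * x k)"
      by (rule sum.cong[OF refl]) (rule hk, simp)
    also have "\<dots> = - (1/2) * (\<Sum>k<K. (w (Rh k) + sqrt u)\<^sup>2) - u * K / 2 + sqrt u * (\<Sum>k<K. w (Rh k) * x k) + u * (\<Sum>k<K. x k)"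
      by (simp add: sum.distrib sum_subtractf sum_distrib_left)
    finally show ?thesis .
  qed
  show ?thesis
    unfolding logw_def Pl_def h_u_def Cst_def n wsum
    using hsum by (simp add: algebra_simps)
qed

lemma exp_logw: "u \<ge> 0 \<Longrightarrow> x \<in> configs K \<Longrightarrow> exp (logw N K b l u w x) = exp (Pl (obs one w) x) * exp (Cst w)"
  by (simp add: logw_Pl exp_add)

lemma Zpos: "(\<Sum>x\<in>configs K. exp (Pl ob x)) > 0"
  by (rule sum_pos) auto

lemma gibbs1_G1: "u \<ge> 0 \<Longrightarrow> gibbs1 N K b l u w f = G1 (obs one w) f"
proof -
  assume u0: "u \<ge> 0"
  have "gibbs1 N K b l u w f = ((\<Sum>x\<in>configs K. f x * exp (Pl (obs one w) x)) * exp (Cst w))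
      / ((\<Sum>x\<in>configs K. exp (Pl (obs one w) x)) * exp (Cst w))"
    unfolding gibbs1_def sum_distrib_right
    by (intro arg_cong2[where f="(/)"] sum.cong) (auto simp: exp_logw[OF u0] mult.assoc)
  then show ?thesis unfolding G1_def by simp
qed

lemma gibbs2_G2: "u \<ge> 0 \<Longrightarrow> gibbs2 N K b l u w f = G2 (obs one w) f"
proof -
  assume u0: "u \<ge> 0"
  have Z: "(\<Sum>x\<in>configs K. exp (logw N K b l u w x)) = (\<Sum>x\<in>configs K. exp (Pl (obs one w) x)) * exp (Cst w)"
    unfolding sum_distrib_right by (rule sum.cong) (auto simp: exp_logw[OF u0])
  have num: "(\<Sum>x1\<in>configs K. \<Sum>x2\<in>configs K. f x1 x2 * exp (logw N K b l u w x1) * exp (logw N K b l u w x2))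
     = (\<Sum>x1\<in>configs K. \<Sum>x2\<in>configs K. f x1 x2 * exp (Pl (obs one w) x1) * exp (Pl (obs one w) x2)) * (exp (Cst w) * exp (Cst w))"
    unfolding sum_distrib_right
    by (intro sum.cong refl) (auto simp: exp_logw[OF u0] ac_simps)
  have "gibbs2 N K b l u w f = ((\<Sum>x1\<in>configs K. \<Sum>x2\<in>configs K. f x1 x2 * exp (Pl (obs one w) x1) * exp (Pl (obs one w) x2)) * (exp (Cst w) * exp (Cst w)))
      / ((\<Sum>x\<in>configs K. exp (Pl (obs one w) x))\<^sup>2 * (exp (Cst w) * exp (Cst w)))"
    unfolding gibbs2_def Z num by (simp add: power2_eq_square ac_simps)
  then show ?thesis unfolding G2_def by simp
qed

end



context model begin

definition fl :: "(nat \<Rightarrow> real) \<Rightarrow> ridx \<Rightarrow> real" where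
  "fl t j = (case j of Rn i \<Rightarrow> 1 | Rw k \<Rightarrow> t k | Rh k \<Rightarrow> t k | Rs i k \<Rightarrow> t k)"

definition Tg :: "(nat \<Rightarrow> real) \<Rightarrow> (ridx \<Rightarrow> real) \<Rightarrow> ridx \<Rightarrow> real" where
  "Tg t v = (\<lambda>j\<in>I. fl t j * v j)"

lemma mulc_configs: "t \<in> configs K \<Longrightarrow> x \<in> configs K \<Longrightarrow> mulc t x \<in> configs K"
  using configs_val[of t K] configs_val[of x K]
  by (fastforce simp: mulc_def configs_def)

lemma mulc_mulc: "t \<in> configs K \<Longrightarrow> x \<in> configs K \<Longrightarrow> mulc t (mulc t x) = x"
  using configs_sq[of t K]
  by (auto simp: mulc_def configs_def fun_eq_iff PiE_def extensional_def mult.assoc[symmetric])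

lemma mulc_one: "t \<in> configs K \<Longrightarrow> mulc t one = t"
  by (auto simp: mulc_def one_def configs_def fun_eq_iff PiE_def extensional_def)

lemma one_configs: "one \<in> configs K"
  by (auto simp: one_def configs_def)

lemma mulc_bij: "t \<in> configs K \<Longrightarrow> bij_betw (mulc t) (configs K) (configs K)"
  by (rule bij_betwI[where g="mulc t"]) (auto simp: mulc_configs mulc_mulc)

lemma Pl_gauge:
  assumes t: "t \<in> configs K" and x: "x \<in> configs K"
  shows "Pl (Tg t ob) (mulc t x) = Pl ob x"
proof -
  have nk: "Tg t ob (Rs i k) * mulc t x k = ob (Rs i k) * x k" if "i < N" "k < K" for i k
  proof -
    have "Tg t ob (Rs i k) * mulc t x k = (t k * t k) * (ob (Rs i k) * x k)"
      using that by (simp add: Tg_def I_def fl_def mulc_def)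
    then show ?thesis using configs_sq[OF t that(2)] by simp
  qed
  have nn: "Tg t ob (Rn i) = ob (Rn i)" if "i < N" for i
    using that by (simp add: Tg_def I_def fl_def)
  have s1: "(\<Sum>i<N. (Tg t ob (Rn i) - sqrt (b / real N) * (\<Sum>k<K. Tg t ob (Rs i k) * mulc t x k))\<^sup>2)
      = (\<Sum>i<N. (ob (Rn i) - sqrt (b / real N) * (\<Sum>k<K. ob (Rs i k) * x k))\<^sup>2)"
  proof (rule sum.cong[OF refl])
    fix i assume "i \<in> {..<N}"
    then have i: "i < N" by simp
    have "(\<Sum>k<K. Tg t ob (Rs i k) * mulc t x k) = (\<Sum>k<K. ob (Rs i k) * x k)"
      by (rule sum.cong[OF refl]) (simp add: nk i)
    then show "(Tg t ob (Rn i) - sqrt (b / real N) * (\<Sum>k<K. Tg t ob (Rs i k) * mulc t x k))\<^sup>2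
      = (ob (Rn i) - sqrt (b / real N) * (\<Sum>k<K. ob (Rs i k) * x k))\<^sup>2"
      by (simp only: nn[OF i])
  qed
  have w: "(Tg t ob (Rw k) - sqrt l * mulc t x k)\<^sup>2 = (ob (Rw k) - sqrt l * x k)\<^sup>2" if "k < K" for k
  proof -
    have "(Tg t ob (Rw k) - sqrt l * mulc t x k) = t k * (ob (Rw k) - sqrt l * x k)"
      using that by (simp add: Tg_def I_def fl_def mulc_def algebra_simps)
    then have "(Tg t ob (Rw k) - sqrt l * mulc t x k)\<^sup>2 = (t k * t k) * (ob (Rw k) - sqrt l * x k)\<^sup>2"
      by (simp add: power2_eq_square)
    then show ?thesis using configs_sq[OF t that] by simp
  qed
  have h: "(Tg t ob (Rh k) - sqrt u * mulc t x k)\<^sup>2 = (ob (Rh k) - sqrt u * x k)\<^sup>2" if "k < K" for k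
  proof -
    have "(Tg t ob (Rh k) - sqrt u * mulc t x k) = t k * (ob (Rh k) - sqrt u * x k)"
      using that by (simp add: Tg_def I_def fl_def mulc_def algebra_simps)
    then have "(Tg t ob (Rh k) - sqrt u * mulc t x k)\<^sup>2 = (t k * t k) * (ob (Rh k) - sqrt u * x k)\<^sup>2"
      by (simp add: power2_eq_square)
    then show ?thesis using configs_sq[OF t that] by simp
  qed
  have s2: "(\<Sum>k<K. (Tg t ob (Rw k) - sqrt l * mulc t x k)\<^sup>2) = (\<Sum>k<K. (ob (Rw k) - sqrt l * x k)\<^sup>2)"
    by (rule sum.cong[OF refl]) (simp add: w)
  have s3: "(\<Sum>k<K. (Tg t ob (Rh k) - sqrt u * mulc t x k)\<^sup>2) = (\<Sum>k<K. (ob (Rh k) - sqrt u * x k)\<^sup>2)"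
    by (rule sum.cong[OF refl]) (simp add: h)
  show ?thesis unfolding Pl_def s1 s2 s3 ..
qed

lemma Tg_obs:
  assumes t: "t \<in> configs K"
  shows "Tg t (obs one v) = obs t (Tg t v)"
proof
  fix j
  show "Tg t (obs one v) j = obs t (Tg t v) j"
  proof (cases "j \<in> I")
    case False then show ?thesis by (simp add: Tg_def obs_def)
  next
    case True
    show ?thesis
    proof (cases j)
      case (Rn i)
      with True have i: "i < N" by (simp add: I_def)
      have e: "(\<Sum>k<K. Tg t v (Rs i k) * t k) = (\<Sum>k<K. v (Rs i k))"
      proof (rule sum.cong[OF refl])
        fix k assume "k \<in> {..<K}"
        then have k: "k < K" by simp
        have "Tg t v (Rs i k) * t k = (t k * t k) * v (Rs i k)"
          using i k by (simp add: Tg_def I_def fl_def)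
        then show "Tg t v (Rs i k) * t k = v (Rs i k)" using configs_sq[OF t k] by simp
      qed
      have "Tg t (obs one v) j = v (Rn i) + sqrt (b / real N) * (\<Sum>k<K. v (Rs i k))"
        using i Rn by (simp add: Tg_def I_def fl_def obs_one_Rn)
      moreover have "obs t (Tg t v) j = Tg t v (Rn i) + sqrt (b / real N) * (\<Sum>k<K. Tg t v (Rs i k) * t k)"
        using i Rn by (simp add: obs_def I_def cc_def)
      moreover have "Tg t v (Rn i) = v (Rn i)" using i by (simp add: Tg_def I_def fl_def)
      ultimately show ?thesis using e by simp
    next
      case (Rw k)
      with True have k: "k < K" by (simp add: I_def)
      show ?thesis using k Rw by (simp add: Tg_def I_def fl_def obs_Rw distrib_left mult.commute)
    next
      case (Rh k)
      with True have k: "k < K" by (simp add: I_def)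
      show ?thesis using k Rh by (simp add: Tg_def I_def fl_def obs_Rh distrib_left mult.commute)
    next
      case (Rs i k)
      with True have ik: "i < N" "k < K" by (simp_all add: I_def)
      show ?thesis using ik Rs by (simp add: Tg_def I_def fl_def obs_Rs)
    qed
  qed
qed

lemma G2_gauge:
  assumes t: "t \<in> configs K"
  and ginv: "\<And>s x1 x2. s \<in> configs K \<Longrightarrow> x1 \<in> configs K \<Longrightarrow> x2 \<in> configs K \<Longrightarrow>
        g (mulc t s) (mulc t x1) (mulc t x2) (Tg t ob) = g s x1 x2 ob"
  shows "G2 (Tg t ob) (\<lambda>x1 x2. g t x1 x2 (Tg t ob)) = G2 ob (\<lambda>x1 x2. g one x1 x2 ob)"
proof -
  have Z: "(\<Sum>x\<in>configs K. exp (Pl (Tg t ob) x)) = (\<Sum>x\<in>configs K. exp (Pl ob x))"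
    using sum.reindex_bij_betw[OF mulc_bij[OF t], of "\<lambda>x. exp (Pl (Tg t ob) x)"]
    by (simp add: Pl_gauge[OF t] cong: sum.cong)
  have num: "(\<Sum>x1\<in>configs K. \<Sum>x2\<in>configs K. g t x1 x2 (Tg t ob) * exp (Pl (Tg t ob) x1) * exp (Pl (Tg t ob) x2))
     = (\<Sum>x1\<in>configs K. \<Sum>x2\<in>configs K. g one x1 x2 ob * exp (Pl ob x1) * exp (Pl ob x2))"
  proof -
    have "(\<Sum>x1\<in>configs K. \<Sum>x2\<in>configs K. g t x1 x2 (Tg t ob) * exp (Pl (Tg t ob) x1) * exp (Pl (Tg t ob) x2))
       = (\<Sum>y1\<in>configs K. \<Sum>x2\<in>configs K. g t (mulc t y1) x2 (Tg t ob) * exp (Pl (Tg t ob) (mulc t y1)) * exp (Pl (Tg t ob) x2))"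
      by (rule sum.reindex_bij_betw[OF mulc_bij[OF t], symmetric])
    also have "\<dots> = (\<Sum>y1\<in>configs K. \<Sum>y2\<in>configs K. g t (mulc t y1) (mulc t y2) (Tg t ob) * exp (Pl (Tg t ob) (mulc t y1)) * exp (Pl (Tg t ob) (mulc t y2)))"
      by (rule sum.cong[OF refl], rule sum.reindex_bij_betw[OF mulc_bij[OF t], symmetric])
    also have "\<dots> = (\<Sum>x1\<in>configs K. \<Sum>x2\<in>configs K. g one x1 x2 ob * exp (Pl ob x1) * exp (Pl ob x2))"
      using ginv[OF one_configs] by (intro sum.cong refl) (simp add: Pl_gauge[OF t] mulc_one[OF t])
    finally show ?thesis .
  qed
  show ?thesis unfolding G2_def Z num ..
qed

end



context model begin

definition "S = (\<lambda>(i,k). Rs i k) ` ({..<N} \<times> {..<K})"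
definition "J = Rn ` {..<N} \<union> Rw ` {..<K} \<union> Rh ` {..<K}"

lemma I_SJ: "I = S \<union> J"
  unfolding I_def data_idx_def S_def J_def by auto

lemma SJ_disj: "S \<inter> J = {}"
  unfolding S_def J_def by auto

lemma finite_S: "finite S" and finite_J: "finite J"
  unfolding S_def J_def by auto

lemma mem_S: "Rs i k \<in> S \<longleftrightarrow> i < N \<and> k < K" "Rn i \<notin> S" "Rw k \<notin> S" "Rh k \<notin> S"
  unfolding S_def by auto

lemma mem_J: "Rn i \<in> J \<longleftrightarrow> i < N" "Rw k \<in> J \<longleftrightarrow> k < K" "Rh k \<in> J \<longleftrightarrow> k < K" "Rs i k \<notin> J"
  unfolding J_def by auto

definition cs :: "(nat \<Rightarrow> real) \<Rightarrow> (ridx \<Rightarrow> real) \<Rightarrow> ridx \<Rightarrow> real" where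
  "cs x v j = (if j \<in> J then cc x v j - cc one v j else 0)"

definition shift :: "(nat \<Rightarrow> real) \<Rightarrow> (ridx \<Rightarrow> real) \<Rightarrow> ridx \<Rightarrow> real" where
  "shift x v = (\<lambda>j\<in>S \<union> J. v j + (if j \<in> J then cs x v j else 0))"

lemma obs_shift: "obs x v = obs one (shift x v)"
proof
  fix j
  show "obs x v j = obs one (shift x v) j"
  proof (cases "j \<in> I")
    case False then show ?thesis by (simp add: obs_def)
  next
    case True
    show ?thesis
    proof (cases j)
      case (Rn i)
      with True have i: "i < N" by (simp add: I_def)
      have e: "(\<Sum>k<K. shift x v (Rs i k) * one k) = (\<Sum>k<K. v (Rs i k) * one k)"
        by (rule sum.cong[OF refl]) (use i in \<open>simp add: shift_def mem_S mem_J\<close>)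
      have "obs one (shift x v) j = shift x v (Rn i) + sqrt (b / real N) * (\<Sum>k<K. shift x v (Rs i k) * one k)"
        using i Rn by (simp add: obs_def I_def cc_def)
      also have "\<dots> = v (Rn i) + cc x v (Rn i)"
        unfolding e using i by (simp add: shift_def mem_S mem_J cs_def cc_def)
      also have "\<dots> = obs x v j" using i Rn by (simp add: obs_def I_def)
      finally show ?thesis ..
    next
      case (Rw k)
      with True have k: "k < K" by (simp add: I_def)
      show ?thesis using k Rw by (simp add: obs_def I_def cc_def shift_def mem_S mem_J cs_def)
    next
      case (Rh k)
      with True have k: "k < K" by (simp add: I_def)
      show ?thesis using k Rh by (simp add: obs_def I_def cc_def shift_def mem_S mem_J cs_def)
    next
      case (Rs i k)
      with True have ik: "i < N" "k < K" by (simp_all add: I_def)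
      show ?thesis using ik Rs by (simp add: obs_def I_def cc_def shift_def mem_S mem_J cs_def)
    qed
  qed
qed

lemma sum_J: "(\<Sum>j\<in>J. F j) = (\<Sum>i<N. F (Rn i)) + (\<Sum>k<K. F (Rw k)) + (\<Sum>k<K. F (Rh k))"
proof -
  have d1: "(Rn ` {..<N} \<union> Rw ` {..<K}) \<inter> Rh ` {..<K} = {}" by auto
  have d2: "Rn ` {..<N} \<inter> Rw ` {..<K} = {}" by auto
  have "(\<Sum>j\<in>J. F j) = (\<Sum>j\<in>Rn ` {..<N}. F j) + (\<Sum>j\<in>Rw ` {..<K}. F j) + (\<Sum>j\<in>Rh ` {..<K}. F j)"
    unfolding J_def by (simp add: sum.union_disjoint d1 d2)
  also have "\<dots> = (\<Sum>i<N. F (Rn i)) + (\<Sum>k<K. F (Rw k)) + (\<Sum>k<K. F (Rh k))"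
    by (simp add: sum.reindex inj_on_def)
  finally show ?thesis .
qed

lemma Pl_J: "Pl (obs one v) x = - (1/2) * (\<Sum>j\<in>J. (v j - cs x v j)\<^sup>2)"
proof -
  have n: "(obs one v (Rn i) - sqrt (b / real N) * (\<Sum>k<K. obs one v (Rs i k) * x k)) = v (Rn i) - cs x v (Rn i)"
    if i: "i < N" for i
  proof -
    have e1: "(\<Sum>k<K. obs one v (Rs i k) * x k) = (\<Sum>k<K. v (Rs i k) * x k)"
      by (rule sum.cong[OF refl]) (simp add: obs_Rs i)
    have e2: "(\<Sum>k<K. v (Rs i k) * one k) = (\<Sum>k<K. v (Rs i k))"
      by (rule sum.cong[OF refl]) simp
    show ?thesis unfolding obs_one_Rn[OF i] e1 using i
      by (simp add: e2 cs_def cc_def mem_J algebra_simps)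
  qed
  have w: "obs one v (Rw k) - sqrt l * x k = v (Rw k) - cs x v (Rw k)" if k: "k < K" for k
    using k by (simp add: obs_Rw cs_def cc_def mem_J algebra_simps)
  have h: "obs one v (Rh k) - sqrt u * x k = v (Rh k) - cs x v (Rh k)" if k: "k < K" for k
    using k by (simp add: obs_Rh cs_def cc_def mem_J algebra_simps)
  have s1: "(\<Sum>i<N. (obs one v (Rn i) - sqrt (b / real N) * (\<Sum>k<K. obs one v (Rs i k) * x k))\<^sup>2)
      = (\<Sum>i<N. (v (Rn i) - cs x v (Rn i))\<^sup>2)"
    by (rule sum.cong[OF refl]) (simp add: n)
  have s2: "(\<Sum>k<K. (obs one v (Rw k) - sqrt l * x k)\<^sup>2) = (\<Sum>k<K. (v (Rw k) - cs x v (Rw k))\<^sup>2)"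
    by (rule sum.cong[OF refl]) (simp add: w)
  have s3: "(\<Sum>k<K. (obs one v (Rh k) - sqrt u * x k)\<^sup>2) = (\<Sum>k<K. (v (Rh k) - cs x v (Rh k))\<^sup>2)"
    by (rule sum.cong[OF refl]) (simp add: h)
  show ?thesis unfolding Pl_def sum_J s1 s2 s3
    by (simp add: algebra_simps)
qed

lemma cs_one: "cs one v = (\<lambda>_. 0)"
  by (simp add: cs_def fun_eq_iff)

lemma rho_eq: "(\<Sum>j\<in>J. cs x v j * v j - (cs x v j)\<^sup>2 / 2) = Pl (obs one v) x - Pl (obs one v) one"
proof -
  have "Pl (obs one v) x - Pl (obs one v) one = (- (1/2)) * (\<Sum>j\<in>J. (v j - cs x v j)\<^sup>2) - (- (1/2)) * (\<Sum>j\<in>J. (v j)\<^sup>2)"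
    unfolding Pl_J[of v x] Pl_J[of v one] cs_one by simp
  also have "\<dots> = (\<Sum>j\<in>J. (- (1/2)) * (v j - cs x v j)\<^sup>2 - (- (1/2)) * (v j)\<^sup>2)"
    by (simp only: sum_distrib_left sum_subtractf)
  also have "\<dots> = (\<Sum>j\<in>J. cs x v j * v j - (cs x v j)\<^sup>2 / 2)"
    by (rule sum.cong) (auto simp: power2_eq_square algebra_simps)
  finally show ?thesis ..
qed

end



context model begin

abbreviation "GG \<equiv> PiM I (\<lambda>_::ridx. mu)"

lemma gauss_eq: "gauss_data N K = GG"
  by (simp add: gauss_data_def mu_def I_def)

lemma mem_II[simp]:
  "Rn i \<in> I \<longleftrightarrow> i < N" "Rw k \<in> I \<longleftrightarrow> k < K"
  "Rh k \<in> I \<longleftrightarrow> k < K" "Rs i k \<in> I \<longleftrightarrow> i < N \<and> k < K"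
  by (simp_all add: I_def)

lemma coord_meas: "j \<in> I \<Longrightarrow> (\<lambda>v. v j) \<in> borel_measurable GG"
  using measurable_component_singleton[of j I "\<lambda>_. mu"] by (simp add: bm_mu)

lemma Pl_meas[measurable]: "(\<lambda>ob. Pl ob x) \<in> borel_measurable GG"
  unfolding Pl_def by (measurable; rule coord_meas; simp)


lemma cc_meas: "j \<in> I \<Longrightarrow> (\<lambda>v. cc x v j) \<in> borel_measurable GG"
  by (cases j) (simp_all add: cc_def, (measurable; rule coord_meas; simp)?)

lemma cs_meas: "(\<lambda>v. cs x v j) \<in> borel_measurable GG"
proof (cases "j \<in> J")
  case True
  then have "j \<in> I" using I_SJ by auto
  with True show ?thesis unfolding cs_def
    using cc_meas[of j x] cc_meas[of j one] by simp
qed (simp add: cs_def)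

lemma coordI_meas: "(\<lambda>v. v j) \<in> measurable GG borel" if "j \<in> I"
  using coord_meas[OF that] .

lemma obs_meas[measurable]: "obs x \<in> measurable GG GG"
  unfolding obs_def
proof (rule measurable_restrict)
  fix j assume j: "j \<in> I"
  show "(\<lambda>v. v j + cc x v j) \<in> measurable GG mu"
    unfolding bm_mu using coord_meas[OF j] cc_meas[OF j] by simp
qed

lemma Tg_meas[measurable]: "Tg t \<in> measurable GG GG"
  unfolding Tg_def
proof (rule measurable_restrict)
  fix j assume j: "j \<in> I"
  show "(\<lambda>v. fl t j * v j) \<in> measurable GG mu"
    unfolding bm_mu using coord_meas[OF j] by simp
qed

lemma shift_meas[measurable]: "shift x \<in> measurable GG GG"
  unfolding shift_def I_SJ[symmetric]
proof (rule measurable_restrict)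
  fix j assume j: "j \<in> I"
  show "(\<lambda>v. v j + (if j \<in> J then cs x v j else 0)) \<in> measurable GG mu"
    unfolding bm_mu using coord_meas[OF j] cs_meas[of x j] by simp
qed

lemma fl_val: assumes t: "t \<in> configs K" shows "j \<in> I \<Longrightarrow> fl t j = 1 \<or> fl t j = -1"
  by (cases j) (simp_all add: fl_def configs_val[OF t])

lemma distr_Tg: assumes t: "t \<in> configs K" shows "distr GG GG (Tg t) = GG"
proof -
  have "distr GG GG (Tg t) = density GG (\<lambda>_. 1)"
  proof (rule distr_eq_density_nn)
    fix H :: "(ridx \<Rightarrow> real) \<Rightarrow> ennreal" assume H: "H \<in> borel_measurable GG"
    have "(\<integral>\<^sup>+ v. H (\<lambda>j\<in>I. fl t j * v j) \<partial>GG) = (\<integral>\<^sup>+ v. (\<Prod>j\<in>I. (\<lambda>_ _. ennreal 1) j (v j)) * H v \<partial>GG)"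
      proof (rule prod_transform[where f="\<lambda>j s. fl t j * s" and r="\<lambda>_ _. ennreal 1"])
      fix j and h :: "real \<Rightarrow> ennreal" assume j: "j \<in> I" and h: "h \<in> borel_measurable (borel :: real measure)"
      show "(\<integral>\<^sup>+ s. h (fl t j * s) \<partial>mu) = (\<integral>\<^sup>+ s. ennreal 1 * h s \<partial>mu)"
        by (rule mu_flip[OF h fl_val[OF t j]])
    qed (use H in \<open>simp_all add: I_def\<close>)
    then show "(\<integral>\<^sup>+ v. H (Tg t v) \<partial>GG) = (\<integral>\<^sup>+ v. 1 * H v \<partial>GG)"
      by (simp add: Tg_def)
  qed simp_all
  then show ?thesis by (simp add: density_1)
qed

lemma cs_S: "(\<And>j. j \<in> S \<Longrightarrow> v j = w j) \<Longrightarrow> cs x v = cs x w"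
  unfolding cs_def
proof (intro ext)
  fix j assume e: "\<And>j. j \<in> S \<Longrightarrow> v j = w j"
  show "(if j \<in> J then cc x v j - cc one v j else 0) = (if j \<in> J then cc x w j - cc one w j else 0)"
  proof (cases j)
    case (Rn i)
    show ?thesis
    proof (cases "i < N")
      case True
      then have vw: "v (Rs i k) = w (Rs i k)" if "k < K" for k using e mem_S that by auto
      have sw: "(\<Sum>k<K. v (Rs i k) * y k) = (\<Sum>k<K. w (Rs i k) * y k)" for y
        by (rule sum.cong[OF refl]) (simp add: vw)
      show ?thesis unfolding Rn cc_def ridx.case sw by (rule refl)
    qed (simp add: Rn mem_J)
  qed (simp_all add: cc_def)
qed

definition rho :: "(nat \<Rightarrow> real) \<Rightarrow> (ridx \<Rightarrow> real) \<Rightarrow> real" where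
  "rho x v = exp (Pl (obs one v) x - Pl (obs one v) one)"

lemma distr_shift: "distr GG GG (shift x) = density GG (\<lambda>v. ennreal (rho x v))"
proof (rule distr_eq_density_nn)
  show "(\<lambda>v. ennreal (rho x v)) \<in> borel_measurable GG" unfolding rho_def by measurable
next
  fix H :: "(ridx \<Rightarrow> real) \<Rightarrow> ennreal" assume H: "H \<in> borel_measurable GG"
  have "(\<integral>\<^sup>+ v. H (\<lambda>j\<in>S \<union> J. v j + (if j \<in> J then cs x v j else 0)) \<partial>PiM (S \<union> J) (\<lambda>_. mu))
      = (\<integral>\<^sup>+ v. ennreal (exp (\<Sum>j\<in>J. cs x v j * v j - (cs x v j)^2 / 2)) * H v \<partial>PiM (S \<union> J) (\<lambda>_. mu))"
    by (rule shift_CM_nn) (use H cs_meas[of x] in \<open>auto simp: finite_S finite_J SJ_disj I_SJ intro: cs_S\<close>)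
  then show "(\<integral>\<^sup>+ v. H (shift x v) \<partial>GG) = (\<integral>\<^sup>+ v. ennreal (rho x v) * H v \<partial>GG)"
    unfolding shift_def rho_def rho_eq I_SJ .
qed simp

end



context model begin

lemma G2_meas:
  assumes Ob[measurable]: "Ob \<in> measurable GG GG"
  and h: "\<And>x1 x2. (\<lambda>v. h x1 x2 v) \<in> borel_measurable GG"
  shows "(\<lambda>v. G2 (Ob v) (\<lambda>x1 x2. h x1 x2 v)) \<in> borel_measurable GG"
  unfolding G2_def using h by measurable

lemma G1_meas:
  assumes Ob[measurable]: "Ob \<in> measurable GG GG"
  and h: "\<And>x. (\<lambda>v. h x v) \<in> borel_measurable GG"
  shows "(\<lambda>v. G1 (Ob v) (\<lambda>x. h x v)) \<in> borel_measurable GG"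
  unfolding G1_def using h by measurable

definition gauge_inv :: "((nat \<Rightarrow> real) \<Rightarrow> (nat \<Rightarrow> real) \<Rightarrow> (nat \<Rightarrow> real) \<Rightarrow> (ridx \<Rightarrow> real) \<Rightarrow> real) \<Rightarrow> bool" where
  "gauge_inv g \<longleftrightarrow> (\<forall>t s x1 x2 ob. t \<in> configs K \<longrightarrow> s \<in> configs K \<longrightarrow> x1 \<in> configs K \<longrightarrow> x2 \<in> configs K \<longrightarrow>
      g (mulc t s) (mulc t x1) (mulc t x2) (Tg t ob) = g s x1 x2 ob)"

definition Qg where "Qg g v = G2 (obs one v) (\<lambda>x1 x2. g one x1 x2 (obs one v))"

definition Sg where "Sg g v = (\<Sum>t\<in>configs K. exp (Pl (obs one v) t) * G2 (obs one v) (\<lambda>x1 x2. g t x1 x2 (obs one v)))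
    / (2 ^ K * exp (Pl (obs one v) one))"

lemma half:
  assumes ginv: "gauge_inv g"
  and gm: "\<And>s x1 x2. g s x1 x2 \<in> borel_measurable GG"
  and int: "integrable GG (Qg g)"
  shows "integral\<^sup>L GG (Qg g) = integral\<^sup>L GG (Sg g)"
proof -
  define F1 where "F1 t v = G2 (obs one v) (\<lambda>x1 x2. g t x1 x2 (obs one v))" for t v
  have F1m[measurable]: "F1 t \<in> borel_measurable GG" for t
    unfolding F1_def by (rule G2_meas) (use gm in \<open>measurable\<close>)
  have rm[measurable]: "rho t \<in> borel_measurable GG" for t unfolding rho_def by measurable
  have step: "integrable GG (\<lambda>v. rho t v * F1 t v) \<and> integral\<^sup>L GG (Qg g) = integral\<^sup>L GG (\<lambda>v. rho t v * F1 t v)"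
    if t: "t \<in> configs K" for t
  proof -
    have eq1: "Qg g v = F1 t (shift t (Tg t v))" for v
    proof -
      have "Qg g v = G2 (Tg t (obs one v)) (\<lambda>x1 x2. g t x1 x2 (Tg t (obs one v)))"
        unfolding Qg_def
        by (rule G2_gauge[OF t, symmetric]) (use ginv t in \<open>simp add: gauge_inv_def\<close>)
      also have "\<dots> = F1 t (shift t (Tg t v))"
        unfolding Tg_obs[OF t] F1_def obs_shift[of t "Tg t v"] ..
      finally show ?thesis .
    qed
    have i1: "integrable GG (\<lambda>v. F1 t (shift t (Tg t v)))"
      using int unfolding eq1[abs_def] .
    have i2: "integrable GG (\<lambda>v. F1 t (shift t v))"
      using i1 integrable_distr_eq[of "Tg t" GG GG "\<lambda>v. F1 t (shift t v)"] distr_Tg[OF t] by simp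
    have i3: "integrable GG (\<lambda>v. rho t v * F1 t v)"
      using i2 integrable_distr_eq[of "shift t" GG GG "F1 t"] distr_shift[of t]
        integrable_density[of "F1 t" GG "rho t"] by (simp add: rho_def)
    have "integral\<^sup>L GG (Qg g) = integral\<^sup>L GG (\<lambda>v. F1 t (shift t (Tg t v)))"
      unfolding eq1[abs_def] ..
    also have "\<dots> = integral\<^sup>L GG (\<lambda>v. F1 t (shift t v))"
      using integral_distr[of "Tg t" GG GG "\<lambda>v. F1 t (shift t v)"] distr_Tg[OF t] by simp
    also have "\<dots> = integral\<^sup>L GG (\<lambda>v. rho t v * F1 t v)"
      using integral_distr[of "shift t" GG GG "F1 t"] distr_shift[of t]
        integral_density[of "F1 t" GG "rho t"] by (simp add: rho_def)
    finally show ?thesis using i3 by simp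
  qed
  have "real (card (configs K)) * integral\<^sup>L GG (Qg g) = (\<Sum>t\<in>configs K. integral\<^sup>L GG (Qg g))"
    by simp
  also have "\<dots> = (\<Sum>t\<in>configs K. integral\<^sup>L GG (\<lambda>v. rho t v * F1 t v))"
    using step by (intro sum.cong) auto
  also have "\<dots> = integral\<^sup>L GG (\<lambda>v. \<Sum>t\<in>configs K. rho t v * F1 t v)"
    by (rule Bochner_Integration.integral_sum[of "configs K" GG "\<lambda>t v. rho t v * F1 t v", symmetric]) (use step in auto)
  finally have A: "2 ^ K * integral\<^sup>L GG (Qg g) = integral\<^sup>L GG (\<lambda>v. \<Sum>t\<in>configs K. rho t v * F1 t v)"
    by (simp add: card_configs)
  have Sg_eq: "Sg g v = (\<Sum>t\<in>configs K. rho t v * F1 t v) / 2 ^ K" for v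
    unfolding Sg_def rho_def F1_def
    by (simp add: exp_diff sum_divide_distrib[symmetric] field_simps)
  have "integral\<^sup>L GG (Sg g) = integral\<^sup>L GG (\<lambda>v. \<Sum>t\<in>configs K. rho t v * F1 t v) / 2 ^ K"
    unfolding Sg_eq by simp
  then have "(2::real) ^ K * integral\<^sup>L GG (Qg g) = 2 ^ K * integral\<^sup>L GG (Sg g)"
    using A by (simp add: field_simps)
  then show ?thesis by simp
qed

lemma G2_swap:
  "(\<Sum>t\<in>configs K. exp (Pl ob t) * G2 ob (\<lambda>x1 x2. h t x1 x2))
   = (\<Sum>t\<in>configs K. exp (Pl ob t) * G2 ob (\<lambda>x1 x2. h x2 x1 t))"
proof -
  let ?C = "configs K" and ?e = "\<lambda>x. exp (Pl ob x)"
  let ?Z = "(\<Sum>x\<in>?C. ?e x)\<^sup>2"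
  have L: "(\<Sum>t\<in>?C. ?e t * G2 ob (\<lambda>x1 x2. f t x1 x2))
      = (\<Sum>t\<in>?C. \<Sum>x1\<in>?C. \<Sum>x2\<in>?C. f t x1 x2 * (?e t * ?e x1 * ?e x2)) / ?Z" for f
    unfolding G2_def sum_divide_distrib
    by (intro sum.cong refl) (simp add: sum_distrib_left sum_divide_distrib ac_simps)
  have "(\<Sum>t\<in>?C. \<Sum>x1\<in>?C. \<Sum>x2\<in>?C. h x2 x1 t * (?e t * ?e x1 * ?e x2))
      = (\<Sum>x1\<in>?C. \<Sum>t\<in>?C. \<Sum>x2\<in>?C. h x2 x1 t * (?e t * ?e x1 * ?e x2))"
    by (rule sum.swap)
  also have "\<dots> = (\<Sum>x1\<in>?C. \<Sum>x2\<in>?C. \<Sum>t\<in>?C. h x2 x1 t * (?e t * ?e x1 * ?e x2))"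
    by (intro sum.cong refl sum.swap)
  also have "\<dots> = (\<Sum>x2\<in>?C. \<Sum>x1\<in>?C. \<Sum>t\<in>?C. h x2 x1 t * (?e t * ?e x1 * ?e x2))"
    by (rule sum.swap)
  also have "\<dots> = (\<Sum>t\<in>?C. \<Sum>x1\<in>?C. \<Sum>x2\<in>?C. h t x1 x2 * (?e t * ?e x1 * ?e x2))"
    by (intro sum.cong refl) (simp add: ac_simps)
  finally show ?thesis unfolding L by simp
qed

lemma nishimori:
  assumes ginv: "gauge_inv g"
  and gm: "\<And>s x1 x2. g s x1 x2 \<in> borel_measurable GG"
  and int1: "integrable GG (Qg g)"
  and int2: "integrable GG (Qg (\<lambda>s x1 x2 ob. g x2 x1 s ob))"
  shows "integral\<^sup>L GG (Qg g) = integral\<^sup>L GG (Qg (\<lambda>s x1 x2 ob. g x2 x1 s ob))"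
proof -
  have ginv2: "gauge_inv (\<lambda>s x1 x2 ob. g x2 x1 s ob)"
    using ginv unfolding gauge_inv_def by blast
  have "Sg g = Sg (\<lambda>s x1 x2 ob. g x2 x1 s ob)"
    unfolding Sg_def using G2_swap by (simp add: fun_eq_iff)
  then show ?thesis
    using half[OF ginv gm int1] half[OF ginv2 gm int2] by simp
qed

end



context model begin

definition sqi :: "((ridx \<Rightarrow> real) \<Rightarrow> real) \<Rightarrow> bool" where
  "sqi f \<longleftrightarrow> f \<in> borel_measurable GG \<and> integrable GG (\<lambda>v. (f v)\<^sup>2)"

lemma coord_distr: "j \<in> I \<Longrightarrow> distr GG mu (\<lambda>v. v j) = mu"
proof -
  interpret product_prob_space "\<lambda>_::ridx. mu" I by (rule pps_mu)
  assume "j \<in> I" then show ?thesis by (rule PiM_component)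
qed

lemma coord_sq_int: assumes j: "j \<in> I" shows "integrable GG (\<lambda>v. (v j)\<^sup>2)"
proof -
  have "integrable mu (\<lambda>x. x\<^sup>2)"
    unfolding mu_def
    using integrable_density[of "\<lambda>x::real. x\<^sup>2" lborel "std_normal_density"]
      integrable_std_normal_moment[of 2] by (simp add: normal_density_nonneg)
  then have "integrable (distr GG mu (\<lambda>v. v j)) (\<lambda>x. x\<^sup>2)" using coord_distr[OF j] by simp
  then show ?thesis
    using integrable_distr_eq[of "\<lambda>v. v j" GG mu "\<lambda>x. x\<^sup>2"] measurable_component_singleton[OF j, of "\<lambda>_. mu"] by simp
qed

lemma coord_sq_integral: assumes j: "j \<in> I" shows "integral\<^sup>L GG (\<lambda>v. (v j)\<^sup>2) = 1"
proof -
  have "integral\<^sup>L mu (\<lambda>x. x\<^sup>2) = 1"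
    unfolding mu_def
    using integral_density[of "\<lambda>x::real. x\<^sup>2" lborel "std_normal_density"]
      integral_std_normal_moment_even[of 1] by (simp add: normal_density_nonneg)
  then have "integral\<^sup>L (distr GG mu (\<lambda>v. v j)) (\<lambda>x. x\<^sup>2) = 1" using coord_distr[OF j] by simp
  then show ?thesis
    using integral_distr[of "\<lambda>v. v j" GG mu "\<lambda>x. x\<^sup>2"] measurable_component_singleton[OF j, of "\<lambda>_. mu"] by simp
qed

lemma sqi_coord: "j \<in> I \<Longrightarrow> sqi (\<lambda>v. v j)"
  unfolding sqi_def using coord_meas coord_sq_int by blast

lemma sqi_cmult: "sqi f \<Longrightarrow> sqi (\<lambda>v. c * f v)"
  unfolding sqi_def by (auto simp: power_mult_distrib)

lemma sqi_zero: "sqi (\<lambda>v. 0)"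
  unfolding sqi_def by simp

lemma sqi_add: assumes f: "sqi f" and g: "sqi g" shows "sqi (\<lambda>v. f v + g v)"
proof -
  have [measurable]: "f \<in> borel_measurable GG" "g \<in> borel_measurable GG" using f g by (auto simp: sqi_def)
  have i: "integrable GG (\<lambda>v. 2 * (f v)\<^sup>2 + 2 * (g v)\<^sup>2)" using f g by (auto simp: sqi_def)
  have "integrable GG (\<lambda>v. (f v + g v)\<^sup>2)"
  proof (rule Bochner_Integration.integrable_bound[OF i])
    show "AE v in GG. norm ((f v + g v)\<^sup>2) \<le> norm (2 * (f v)\<^sup>2 + 2 * (g v)\<^sup>2)"
    proof (rule AE_I2)
      fix v
      have "0 \<le> (f v - g v)\<^sup>2" by simp
      then have "(f v + g v)\<^sup>2 \<le> 2 * (f v)\<^sup>2 + 2 * (g v)\<^sup>2"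
        by (simp add: power2_eq_square algebra_simps)
      then show "norm ((f v + g v)\<^sup>2) \<le> norm (2 * (f v)\<^sup>2 + 2 * (g v)\<^sup>2)"
        by simp
    qed
  qed measurable
  moreover have "(\<lambda>v. f v + g v) \<in> borel_measurable GG" by measurable
  ultimately show ?thesis unfolding sqi_def by simp
qed

lemma sqi_sum: "finite A \<Longrightarrow> (\<And>i. i \<in> A \<Longrightarrow> sqi (f i)) \<Longrightarrow> sqi (\<lambda>v. \<Sum>i\<in>A. f i v)"
  by (induction A rule: finite_induct) (auto simp: sqi_zero intro!: sqi_add)

lemma sqi_mult: assumes f: "sqi f" and g: "sqi g" shows "integrable GG (\<lambda>v. f v * g v)"
proof -
  have [measurable]: "f \<in> borel_measurable GG" "g \<in> borel_measurable GG" using f g by (auto simp: sqi_def)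
  have i: "integrable GG (\<lambda>v. (f v)\<^sup>2 + (g v)\<^sup>2)" using f g by (auto simp: sqi_def)
  show ?thesis
  proof (rule Bochner_Integration.integrable_bound[OF i])
    show "AE v in GG. norm (f v * g v) \<le> norm ((f v)\<^sup>2 + (g v)\<^sup>2)"
    proof (rule AE_I2)
      fix v
      have "0 \<le> (\<bar>f v\<bar> - \<bar>g v\<bar>)\<^sup>2" by simp
      then have "2 * (\<bar>f v\<bar> * \<bar>g v\<bar>) \<le> (f v)\<^sup>2 + (g v)\<^sup>2"
        by (simp add: power2_eq_square algebra_simps)
      moreover have "0 \<le> \<bar>f v\<bar> * \<bar>g v\<bar>" by simp
      ultimately have "\<bar>f v\<bar> * \<bar>g v\<bar> \<le> (f v)\<^sup>2 + (g v)\<^sup>2" by linarith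
      then show "norm (f v * g v) \<le> norm ((f v)\<^sup>2 + (g v)\<^sup>2)"
        by (simp add: abs_mult)
    qed
  qed measurable
qed

definition nfun :: "(nat \<Rightarrow> real) \<Rightarrow> (ridx \<Rightarrow> real) \<Rightarrow> nat \<Rightarrow> real" where
  "nfun s ob i = ob (Rn i) - sqrt (b / real N) * (\<Sum>k<K. ob (Rs i k) * s k)"

lemma nfun_obs: "i < N \<Longrightarrow> nfun s (obs one v) i = v (Rn i) + sqrt (b / real N) * (\<Sum>k<K. (1 - s k) * v (Rs i k))"
proof -
  assume i: "i < N"
  have e1: "(\<Sum>k<K. obs one v (Rs i k) * s k) = (\<Sum>k<K. v (Rs i k) * s k)"
    by (rule sum.cong[OF refl]) (simp add: obs_Rs i)
  have e2: "(\<Sum>k<K. (1 - s k) * v (Rs i k)) = (\<Sum>k<K. v (Rs i k)) - (\<Sum>k<K. v (Rs i k) * s k)"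
    by (simp add: sum_subtractf[symmetric] algebra_simps)
  have "nfun s (obs one v) i = v (Rn i) + sqrt (b / real N) * (\<Sum>k<K. v (Rs i k)) - sqrt (b / real N) * (\<Sum>k<K. v (Rs i k) * s k)"
    unfolding nfun_def obs_one_Rn[OF i] e1 ..
  also have "\<dots> = v (Rn i) + sqrt (b / real N) * ((\<Sum>k<K. v (Rs i k)) - (\<Sum>k<K. v (Rs i k) * s k))"
    by (simp add: right_diff_distrib)
  finally show ?thesis unfolding e2 .
qed

lemma nfun_one: "i < N \<Longrightarrow> nfun one (obs one v) i = v (Rn i)"
  by (simp add: nfun_obs)

lemma sqi_nfun: "i < N \<Longrightarrow> sqi (\<lambda>v. nfun s (obs one v) i)"
  unfolding nfun_obs
  by (intro sqi_add sqi_coord sqi_cmult sqi_sum) (auto intro!: sqi_coord sqi_cmult)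

lemma nfun_gauge: "t \<in> configs K \<Longrightarrow> i < N \<Longrightarrow> nfun (mulc t s) (Tg t ob) i = nfun s ob i"
proof -
  assume t: "t \<in> configs K" and i: "i < N"
  have "(\<Sum>k<K. Tg t ob (Rs i k) * mulc t s k) = (\<Sum>k<K. ob (Rs i k) * s k)"
  proof (rule sum.cong[OF refl])
    fix k assume "k \<in> {..<K}" then have k: "k < K" by simp
    have "Tg t ob (Rs i k) * mulc t s k = (t k * t k) * (ob (Rs i k) * s k)"
      using i k by (simp add: Tg_def fl_def mulc_def)
    then show "Tg t ob (Rs i k) * mulc t s k = ob (Rs i k) * s k" using configs_sq[OF t k] by simp
  qed
  moreover have "Tg t ob (Rn i) = ob (Rn i)" using i by (simp add: Tg_def fl_def)
  ultimately show ?thesis unfolding nfun_def by simp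
qed

lemma nfun_meas: assumes i: "i < N" shows "(\<lambda>ob. nfun s ob i) \<in> borel_measurable GG"
proof -
  have [measurable]: "(\<lambda>ob. ob (Rn i)) \<in> borel_measurable GG" using coord_meas i by simp
  have [measurable]: "(\<lambda>ob. ob (Rs i k)) \<in> borel_measurable GG" if "k \<in> {..<K}" for k
    using coord_meas i that by simp
  show ?thesis unfolding nfun_def by measurable
qed

end



context model begin

lemma Zpos': "0 < (\<Sum>x\<in>configs K. exp (Pl ob x))" by (rule Zpos)

lemma e_le_Z: "x \<in> configs K \<Longrightarrow> exp (Pl ob x) \<le> (\<Sum>x\<in>configs K. exp (Pl ob x))"
  by (rule member_le_sum) auto

lemma G2_bound: "\<bar>G2 ob f\<bar> \<le> (\<Sum>x1\<in>configs K. \<Sum>x2\<in>configs K. \<bar>f x1 x2\<bar>)"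
proof -
  let ?C = "configs K" and ?e = "\<lambda>x. exp (Pl ob x)"
  let ?Z = "\<Sum>x\<in>configs K. exp (Pl ob x)"
  have Z: "0 < ?Z" by (rule Zpos)
  have "\<bar>\<Sum>x1\<in>?C. \<Sum>x2\<in>?C. f x1 x2 * ?e x1 * ?e x2\<bar> \<le> (\<Sum>x1\<in>?C. \<bar>\<Sum>x2\<in>?C. f x1 x2 * ?e x1 * ?e x2\<bar>)"
    by (rule sum_abs)
  also have "\<dots> \<le> (\<Sum>x1\<in>?C. \<Sum>x2\<in>?C. \<bar>f x1 x2 * ?e x1 * ?e x2\<bar>)"
    by (intro sum_mono sum_abs)
  also have "\<dots> \<le> (\<Sum>x1\<in>?C. \<Sum>x2\<in>?C. \<bar>f x1 x2\<bar> * (?Z * ?Z))"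
  proof (intro sum_mono)
    fix x1 x2 assume x1: "x1 \<in> ?C" and x2: "x2 \<in> ?C"
    have "?e x1 * ?e x2 \<le> ?Z * ?Z"
      by (intro mult_mono e_le_Z x1 x2) (auto intro: less_imp_le[OF Z])
    then show "\<bar>f x1 x2 * ?e x1 * ?e x2\<bar> \<le> \<bar>f x1 x2\<bar> * (?Z * ?Z)"
      by (simp add: abs_mult mult.assoc mult_left_mono)
  qed
  also have "\<dots> = (\<Sum>x1\<in>?C. \<Sum>x2\<in>?C. \<bar>f x1 x2\<bar>) * ?Z\<^sup>2"
    by (simp add: sum_distrib_right power2_eq_square)
  finally have "\<bar>\<Sum>x1\<in>?C. \<Sum>x2\<in>?C. f x1 x2 * ?e x1 * ?e x2\<bar> \<le> (\<Sum>x1\<in>?C. \<Sum>x2\<in>?C. \<bar>f x1 x2\<bar>) * ?Z\<^sup>2" .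
  then show ?thesis unfolding G2_def using Z
    by (simp add: abs_div pos_divide_le_eq)
qed

lemma G1_bound: "\<bar>G1 ob f\<bar> \<le> (\<Sum>x\<in>configs K. \<bar>f x\<bar>)"
proof -
  let ?C = "configs K" and ?e = "\<lambda>x. exp (Pl ob x)"
  let ?Z = "\<Sum>x\<in>configs K. exp (Pl ob x)"
  have Z: "0 < ?Z" by (rule Zpos)
  have "\<bar>\<Sum>x\<in>?C. f x * ?e x\<bar> \<le> (\<Sum>x\<in>?C. \<bar>f x * ?e x\<bar>)"
    by (rule sum_abs)
  also have "\<dots> \<le> (\<Sum>x\<in>?C. \<bar>f x\<bar> * ?Z)"
  proof (intro sum_mono)
    fix x assume x: "x \<in> ?C"
    show "\<bar>f x * ?e x\<bar> \<le> \<bar>f x\<bar> * ?Z"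
      using e_le_Z[OF x] by (simp add: abs_mult mult_left_mono)
  qed
  also have "\<dots> = (\<Sum>x\<in>?C. \<bar>f x\<bar>) * ?Z"
    by (simp add: sum_distrib_right)
  finally show ?thesis unfolding G1_def using Z
    by (simp add: abs_div pos_divide_le_eq)
qed

lemma G2_int:
  assumes i: "\<And>x1 x2. x1 \<in> configs K \<Longrightarrow> x2 \<in> configs K \<Longrightarrow> integrable GG (F x1 x2)"
  and m: "\<And>x1 x2. F x1 x2 \<in> borel_measurable GG"
  shows "integrable GG (\<lambda>v. G2 (obs one v) (\<lambda>x1 x2. F x1 x2 v))"
proof (rule Bochner_Integration.integrable_bound)
  show "integrable GG (\<lambda>v. \<Sum>x1\<in>configs K. \<Sum>x2\<in>configs K. \<bar>F x1 x2 v\<bar>)"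
    using i by (intro Bochner_Integration.integrable_sum integrable_abs) auto
  show "(\<lambda>v. G2 (obs one v) (\<lambda>x1 x2. F x1 x2 v)) \<in> borel_measurable GG"
    by (rule G2_meas) (use m in auto)
  show "AE v in GG. norm (G2 (obs one v) (\<lambda>x1 x2. F x1 x2 v)) \<le> norm (\<Sum>x1\<in>configs K. \<Sum>x2\<in>configs K. \<bar>F x1 x2 v\<bar>)"
  proof (rule AE_I2)
    fix v
    have "0 \<le> (\<Sum>x1\<in>configs K. \<Sum>x2\<in>configs K. \<bar>F x1 x2 v\<bar>)" by (intro sum_nonneg) auto
    then show "norm (G2 (obs one v) (\<lambda>x1 x2. F x1 x2 v)) \<le> norm (\<Sum>x1\<in>configs K. \<Sum>x2\<in>configs K. \<bar>F x1 x2 v\<bar>)"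
      using G2_bound[of "obs one v" "\<lambda>x1 x2. F x1 x2 v"] by simp
  qed
qed

lemma G1_int:
  assumes i: "\<And>x. x \<in> configs K \<Longrightarrow> integrable GG (F x)"
  and m: "\<And>x. F x \<in> borel_measurable GG"
  shows "integrable GG (\<lambda>v. G1 (obs one v) (\<lambda>x. F x v))"
proof (rule Bochner_Integration.integrable_bound)
  show "integrable GG (\<lambda>v. \<Sum>x\<in>configs K. \<bar>F x v\<bar>)"
    using i by (intro Bochner_Integration.integrable_sum integrable_abs) auto
  show "(\<lambda>v. G1 (obs one v) (\<lambda>x. F x v)) \<in> borel_measurable GG"
    by (rule G1_meas) (use m in auto)
  show "AE v in GG. norm (G1 (obs one v) (\<lambda>x. F x v)) \<le> norm (\<Sum>x\<in>configs K. \<bar>F x v\<bar>)"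
  proof (rule AE_I2)
    fix v
    have "0 \<le> (\<Sum>x\<in>configs K. \<bar>F x v\<bar>)" by (intro sum_nonneg) auto
    then show "norm (G1 (obs one v) (\<lambda>x. F x v)) \<le> norm (\<Sum>x\<in>configs K. \<bar>F x v\<bar>)"
      using G1_bound[of "obs one v" "\<lambda>x. F x v"] by simp
  qed
qed

lemma G1_G2: "G2 ob (\<lambda>x1 x2. h x2) = G1 ob h"
proof -
  let ?C = "configs K" and ?e = "\<lambda>x. exp (Pl ob x)"
  let ?Z = "\<Sum>x\<in>configs K. exp (Pl ob x)"
  have Z: "0 < ?Z" by (rule Zpos)
  have "(\<Sum>x1\<in>?C. \<Sum>x2\<in>?C. h x2 * ?e x1 * ?e x2) = (\<Sum>x1\<in>?C. ?e x1 * (\<Sum>x2\<in>?C. h x2 * ?e x2))"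
    by (intro sum.cong refl) (simp add: sum_distrib_left ac_simps)
  also have "\<dots> = ?Z * (\<Sum>x2\<in>?C. h x2 * ?e x2)"
    by (simp add: sum_distrib_right)
  finally have "(\<Sum>x1\<in>?C. \<Sum>x2\<in>?C. h x2 * ?e x1 * ?e x2) = ?Z * (\<Sum>x2\<in>?C. h x2 * ?e x2)" .
  then show ?thesis unfolding G2_def G1_def using Z
    by (simp add: power2_eq_square)
qed

lemma G1_const: "G1 ob (\<lambda>_. c) = c"
  unfolding G1_def using Zpos[of ob] by (simp add: sum_distrib_left[symmetric])

lemma G2_lin: "G2 ob (\<lambda>x1 x2. f x1 x2 - g x1 x2 + h x1 x2) = G2 ob f - G2 ob g + G2 ob h"
  unfolding G2_def
  by (simp add: algebra_simps sum.distrib sum_subtractf add_divide_distrib diff_divide_distrib)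

lemma G1_sum: "(\<Sum>k\<in>A. G1 ob (f k)) = G1 ob (\<lambda>x. \<Sum>k\<in>A. f k x)"
  unfolding G1_def
  by (simp add: sum_divide_distrib[symmetric] sum_distrib_right sum.swap[of _ A])

end



context model begin

definition gZ where "gZ s x1 x2 ob = (\<Sum>i<N. (nfun x2 ob i)\<^sup>2)"
definition ga where "ga s x1 x2 ob = (\<Sum>i<N. nfun s ob i * nfun x2 ob i) * (\<Sum>k<K. x1 k * x2 k)"

lemma nfun_meas'[measurable]: "i \<in> {..<N} \<Longrightarrow> (\<lambda>ob. nfun s ob i) \<in> borel_measurable GG"
  using nfun_meas by simp

lemma gZ_meas: "gZ s x1 x2 \<in> borel_measurable GG"
  unfolding gZ_def[abs_def] by measurable

lemma ga_meas: "ga s x1 x2 \<in> borel_measurable GG"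
  unfolding ga_def[abs_def] by measurable

lemma mulc_dot: "t \<in> configs K \<Longrightarrow> (\<Sum>k<K. mulc t x1 k * mulc t x2 k) = (\<Sum>k<K. x1 k * x2 k)"
proof (rule sum.cong[OF refl])
  fix k assume t: "t \<in> configs K" and "k \<in> {..<K}"
  then have k: "k < K" by simp
  have "mulc t x1 k * mulc t x2 k = (t k * t k) * (x1 k * x2 k)" using k by (simp add: mulc_def ac_simps)
  then show "mulc t x1 k * mulc t x2 k = x1 k * x2 k" using configs_sq[OF t k] by simp
qed

lemma gZ_inv: "gauge_inv gZ"
  unfolding gauge_inv_def gZ_def by (auto simp: nfun_gauge intro!: sum.cong)

lemma ga_inv: "gauge_inv ga"
  unfolding gauge_inv_def ga_def by (auto simp: nfun_gauge mulc_dot intro!: sum.cong arg_cong2[where f="(*)"])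

lemma int_nfun2: "integrable GG (\<lambda>v. nfun s (obs one v) i * nfun s' (obs one v) i)" if "i < N"
  using sqi_mult[OF sqi_nfun[OF that] sqi_nfun[OF that]] .

lemma meas_nfun_obs[measurable]: "i \<in> {..<N} \<Longrightarrow> (\<lambda>v. nfun s (obs one v) i) \<in> borel_measurable GG"
  using sqi_nfun unfolding sqi_def by auto

lemma Zcomp_nfun: "i < N \<Longrightarrow> Zcomp N K b w x i = nfun x (obs one w) i"
  unfolding nfun_obs Zcomp_def zvec_def by (simp add: ac_simps)

lemma Qg_gZ_int: "integrable GG (Qg gZ)"
  unfolding Qg_def[abs_def] gZ_def
  by (rule G2_int) (auto simp: power2_eq_square intro!: Bochner_Integration.integrable_sum int_nfun2)

lemma Qg_gZ'_eq: "Qg (\<lambda>s x1 x2 ob. gZ x2 x1 s ob) v = (\<Sum>i<N. (v (Rn i))\<^sup>2)"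
  unfolding Qg_def gZ_def
  using G1_G2[of "obs one v" "\<lambda>_. \<Sum>i<N. (nfun one (obs one v) i)\<^sup>2"] G1_const
  by (simp add: nfun_one)

lemma sum_sq_int: "integrable GG (\<lambda>v. \<Sum>i<N. (v (Rn i))\<^sup>2)"
  by (intro Bochner_Integration.integrable_sum coord_sq_int) simp

lemma final1:
  assumes N: "N > 0"
  shows "(1 / real N) * (\<integral>w. gibbs1 N K b l u w (\<lambda>x. \<Sum>i<N. (Zcomp N K b w x i)\<^sup>2) \<partial>gauss_data N K) = 1"
proof -
  have eq: "gibbs1 N K b l u w (\<lambda>x. \<Sum>i<N. (Zcomp N K b w x i)\<^sup>2) = Qg gZ w" for w
  proof -
    have "gibbs1 N K b l u w (\<lambda>x. \<Sum>i<N. (Zcomp N K b w x i)\<^sup>2) = G1 (obs one w) (\<lambda>x. \<Sum>i<N. (nfun x (obs one w) i)\<^sup>2)"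
      unfolding gibbs1_G1[OF u0] by (simp add: Zcomp_nfun)
    also have "\<dots> = Qg gZ w"
      unfolding Qg_def gZ_def G1_G2 ..
    finally show ?thesis .
  qed
  have "(\<integral>w. gibbs1 N K b l u w (\<lambda>x. \<Sum>i<N. (Zcomp N K b w x i)\<^sup>2) \<partial>gauss_data N K) = integral\<^sup>L GG (Qg gZ)"
    unfolding gauss_eq eq ..
  also have "\<dots> = integral\<^sup>L GG (Qg (\<lambda>s x1 x2 ob. gZ x2 x1 s ob))"
    by (rule nishimori[OF gZ_inv gZ_meas Qg_gZ_int]) (unfold Qg_gZ'_eq, rule sum_sq_int)
  also have "\<dots> = (\<integral>v. (\<Sum>i<N. (v (Rn i))\<^sup>2) \<partial>GG)"
    unfolding Qg_gZ'_eq ..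
  also have "\<dots> = (\<Sum>i<N. (\<integral>v. (v (Rn i))\<^sup>2 \<partial>GG))"
    by (rule Bochner_Integration.integral_sum) (simp add: coord_sq_int)
  also have "\<dots> = real N"
    by (simp add: coord_sq_integral)
  finally show ?thesis using N by simp
qed


definition Pf where "Pf x v = (\<Sum>i<N. nfun one (obs one v) i * nfun x (obs one v) i)"

lemma Pf_int: "integrable GG (Pf x)"
  unfolding Pf_def[abs_def] by (intro Bochner_Integration.integrable_sum int_nfun2) simp

lemma Pf_meas[measurable]: "Pf x \<in> borel_measurable GG"
  unfolding Pf_def[abs_def] by measurable

lemma Pf_intc: "integrable GG (\<lambda>v. Pf x v * c)"
  using Pf_int by simp

lemma final2:
  shows "(\<integral>w. gibbs2 N K b l u w (\<lambda>x1 x2. (\<Sum>i<N. w (Rn i) * Zcomp N K b w x2 i)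
                     * (\<Sum>k<K. zvec x1 k * zvec x2 k)) \<partial>gauss_data N K)
         = (\<Sum>k<K. \<integral>w. gibbs1 N K b l u w
            (\<lambda>x. (\<Sum>i<N. w (Rn i) * Zcomp N K b w x i) * zvec x k) \<partial>gauss_data N K)"
proof -
  define gb where "gb = (\<lambda>s x1 x2 ob. ga x2 x1 s ob)"
  define A where "A v = G1 (obs one v) (\<lambda>x. Pf x v * (\<Sum>k<K. 1 - x k))" for v
  have nP: "(\<Sum>i<N. w (Rn i) * Zcomp N K b w x i) = Pf x w" for w x
    unfolding Pf_def by (intro sum.cong refl) (simp add: nfun_one Zcomp_nfun)
  have lhs_eq: "gibbs2 N K b l u w (\<lambda>x1 x2. (\<Sum>i<N. w (Rn i) * Zcomp N K b w x2 i)
                     * (\<Sum>k<K. zvec x1 k * zvec x2 k)) = A w - Qg gb w + Qg ga w" for w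
  proof -
    have "gibbs2 N K b l u w (\<lambda>x1 x2. (\<Sum>i<N. w (Rn i) * Zcomp N K b w x2 i)
                     * (\<Sum>k<K. zvec x1 k * zvec x2 k))
        = G2 (obs one w) (\<lambda>x1 x2. Pf x2 w * (\<Sum>k<K. 1 - x2 k) - Pf x2 w * (\<Sum>k<K. x1 k) + Pf x2 w * (\<Sum>k<K. x1 k * x2 k))"
    proof -
      have zz: "(\<Sum>k<K. zvec x1 k * zvec x2 k) = (\<Sum>k<K. 1 - x2 k) - (\<Sum>k<K. x1 k) + (\<Sum>k<K. x1 k * x2 k)" for x1 x2
        unfolding zvec_def by (simp add: sum.distrib[symmetric] sum_subtractf[symmetric] algebra_simps)
      show ?thesis unfolding gibbs2_G2[OF u0] nP zz by (simp add: algebra_simps)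
    qed
    also have "\<dots> = A w - Qg gb w + Qg ga w"
    proof -
      have "G2 (obs one w) (\<lambda>x1 x2. Pf x2 w * (\<Sum>k<K. 1 - x2 k)) = A w"
        unfolding A_def by (rule G1_G2)
      moreover have "G2 (obs one w) (\<lambda>x1 x2. Pf x2 w * (\<Sum>k<K. x1 k)) = Qg gb w"
      proof -
        have "(\<Sum>k<K. x1 k * one k) = (\<Sum>k<K. x1 k)" for x1 by (intro sum.cong) auto
        moreover have "(\<Sum>i<N. nfun x2 (obs one w) i * nfun one (obs one w) i) = Pf x2 w" for x2
          unfolding Pf_def by (simp add: mult.commute)
        ultimately show ?thesis unfolding Qg_def gb_def ga_def by simp
      qed
      moreover have "G2 (obs one w) (\<lambda>x1 x2. Pf x2 w * (\<Sum>k<K. x1 k * x2 k)) = Qg ga w"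
        unfolding Qg_def ga_def Pf_def ..
      ultimately show ?thesis by (simp add: G2_lin)
    qed
    finally show ?thesis .
  qed
  have intA: "integrable GG A"
    unfolding A_def[abs_def] by (rule G1_int) (auto simp: Pf_int)
  have intga: "integrable GG (Qg ga)"
    unfolding Qg_def[abs_def] ga_def
    by (rule G2_int) (auto intro!: Bochner_Integration.integrable_mult_right Bochner_Integration.integrable_sum int_nfun2)
  have intgb: "integrable GG (Qg gb)"
    unfolding Qg_def[abs_def] ga_def gb_def
    by (rule G2_int) (auto intro!: Bochner_Integration.integrable_mult_right Bochner_Integration.integrable_sum int_nfun2)
  have nish: "integral\<^sup>L GG (Qg ga) = integral\<^sup>L GG (Qg gb)"
    unfolding gb_def by (rule nishimori[OF ga_inv ga_meas intga]) (fold gb_def, rule intgb)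
  have "(\<integral>w. gibbs2 N K b l u w (\<lambda>x1 x2. (\<Sum>i<N. w (Rn i) * Zcomp N K b w x2 i)
                     * (\<Sum>k<K. zvec x1 k * zvec x2 k)) \<partial>gauss_data N K)
      = integral\<^sup>L GG (\<lambda>w. A w - Qg gb w + Qg ga w)"
    unfolding gauss_eq lhs_eq ..
  also have "\<dots> = integral\<^sup>L GG A - integral\<^sup>L GG (Qg gb) + integral\<^sup>L GG (Qg ga)"
    using intA intga intgb by simp
  also have "\<dots> = integral\<^sup>L GG A" using nish by simp
  also have "\<dots> = (\<integral>v. (\<Sum>k<K. G1 (obs one v) (\<lambda>x. Pf x v * (1 - x k))) \<partial>GG)"
    unfolding A_def G1_sum by (simp add: sum_distrib_left)
  also have "\<dots> = (\<Sum>k<K. \<integral>v. G1 (obs one v) (\<lambda>x. Pf x v * (1 - x k)) \<partial>GG)"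
    by (rule Bochner_Integration.integral_sum) (rule G1_int, auto simp: Pf_int)
  also have "\<dots> = (\<Sum>k<K. \<integral>w. gibbs1 N K b l u w
            (\<lambda>x. (\<Sum>i<N. w (Rn i) * Zcomp N K b w x i) * zvec x k) \<partial>gauss_data N K)"
    unfolding gauss_eq gibbs1_G1[OF u0] nP zvec_def ..
  finally show ?thesis .
qed

end

theorem lemma2:
  fixes N K :: nat and \<beta> :: real and B lam :: "real \<Rightarrow> real" and t u :: real
  assumes "N > 0"
    and "real K / real N = \<beta>"
    and "\<And>s. s \<in> {0..1} \<Longrightarrow> B s \<ge> 0"
    and "\<And>s. s \<in> {0..1} \<Longrightarrow> lam s \<ge> 0"
    and "t \<in> {0..1}"
    and "u \<ge> 0"
  shows "((1 / real N) * (\<integral>\<omega>. gibbs1 N K (B t) (lam t) u \<omega>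
            (\<lambda>x. \<Sum>i<N. (Zcomp N K (B t) \<omega> x i)\<^sup>2) \<partial>gauss_data N K) = 1)
       \<and> ((\<integral>\<omega>. gibbs2 N K (B t) (lam t) u \<omega>
            (\<lambda>x1 x2. (\<Sum>i<N. \<omega> (Rn i) * Zcomp N K (B t) \<omega> x2 i)
                     * (\<Sum>k<K. zvec x1 k * zvec x2 k)) \<partial>gauss_data N K)
         = (\<Sum>k<K. \<integral>\<omega>. gibbs1 N K (B t) (lam t) u \<omega>
            (\<lambda>x. (\<Sum>i<N. \<omega> (Rn i) * Zcomp N K (B t) \<omega> x i) * zvec x k) \<partial>gauss_data N K))"
proof -
  interpret M: model N K "B t" "lam t" u by unfold_locales (rule assms(6))
  show ?thesis using M.final1[OF assms(1)] M.final2 by simp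
qed

end
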